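(* Let $(\mu_n)_{n\ge0}$ be a non-increasing sequence of positive numbers such that $\mu_n=O\left(\frac{1}{n^r}\right)$ for some $r>1$. For each $1\le q<\infty$ there is $p_0>1$ such that $H_\mu(\ell^p_A)\subseteq\ell^q_A$ and $C_\mu(\ell^p_A)\subseteq\ell^q_A$ for each $1<p<p_0$. Moreover, the corresponding restrictions $H_\mu:\ell^p_A\to\ell^q_A$ and $C_\mu:\ell^p_A\to\ell^q_A$ are nuclear if $q=1$ and compact if $q>1$. In particular, $H_\mu:\ell^2_A\to\ell^2_A$ and $C_\mu:\ell^2_A\to\ell^2_A$ are well defined compact operators, and they are nuclear if $r>\frac32$.
   Context: $\ell^p_A$ ($1\le p<\infty$) is the space of $f(z)=\sum_{n\ge0}a_nz^n\in H(\mathbb{D})$ with $\sum_n|a_n|^p<\infty$ (norm $(\sum|a_n|^p)^{1/p}$), and $\ell^\infty_A$ those with $\sup_n|a_n|<\infty$; functions are identified with coefficient sequences. $H_\mu:\ell^\infty_A\to\ell^\infty_A$, $H_\mu((a_n)_{n\ge0})=\left(\sum_{n=0}^\infty\mu_{n+k}a_n\right)_{k\ge0}$ and $C_\mu((a_n)_{n\ge0})=\left(\mu_k\sum_{n=0}^ka_n\right)_{k\ge0}$. An operator $T:X\to Y$ is nuclear if $T=\sum_nx_n^*(\cdot)y_n$ with $x_n^*\in X^*$, $y_n\in Y$, $\sum_n\|x_n^*\|\|y_n\|<\infty$. *)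

theory Defs
  imports "HOL-Analysis.Analysis" "HOL-Library.Landau_Symbols"
begin

text \<open>Elements of the spaces ell^p_A are identified with their (complex) Taylor
coefficient sequences.\<close>

definition lpA :: "real \<Rightarrow> (nat \<Rightarrow> complex) \<Rightarrow> bool" where
  "lpA p a \<longleftrightarrow> summable (\<lambda>n. norm (a n) powr p)"

definition lpA_norm :: "real \<Rightarrow> (nat \<Rightarrow> complex) \<Rightarrow> real" where
  "lpA_norm p a = (\<Sum>n. norm (a n) powr p) powr (1 / p)"

definition hankel_op :: "(nat \<Rightarrow> real) \<Rightarrow> (nat \<Rightarrow> complex) \<Rightarrow> (nat \<Rightarrow> complex)" where
  "hankel_op mu a = (\<lambda>k. \<Sum>n. complex_of_real (mu (n + k)) * a n)"

definition cesaro_op :: "(nat \<Rightarrow> real) \<Rightarrow> (nat \<Rightarrow> complex) \<Rightarrow> (nat \<Rightarrow> complex)" where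
  "cesaro_op mu a = (\<lambda>k. complex_of_real (mu k) * (\<Sum>n\<le>k. a n))"

definition bdd_lin_functional :: "real \<Rightarrow> ((nat \<Rightarrow> complex) \<Rightarrow> complex) \<Rightarrow> real \<Rightarrow> bool" where
  "bdd_lin_functional p f c \<longleftrightarrow>
     (\<forall>a b. lpA p a \<longrightarrow> lpA p b \<longrightarrow> f (\<lambda>n. a n + b n) = f a + f b) \<and>
     (\<forall>a s. lpA p a \<longrightarrow> f (\<lambda>n. s * a n) = s * f a) \<and>
     (\<forall>a. lpA p a \<longrightarrow> norm (f a) \<le> c * lpA_norm p a)"

text \<open>Nuclear operator T : ell^p_A \<rightarrow> ell^q_A: T = \<Sum>k x_k^*(.) y_k with
  \<Sum>k ||x_k^*|| ||y_k|| < \<infinity> (c k bounds the dual norm of x_k^*), the series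
  converging in ell^q_A for every argument.\<close>

definition nuclear_op :: "real \<Rightarrow> real \<Rightarrow> ((nat \<Rightarrow> complex) \<Rightarrow> (nat \<Rightarrow> complex)) \<Rightarrow> bool" where
  "nuclear_op p q T \<longleftrightarrow>
     (\<exists>(x :: nat \<Rightarrow> (nat \<Rightarrow> complex) \<Rightarrow> complex) (y :: nat \<Rightarrow> nat \<Rightarrow> complex) (c :: nat \<Rightarrow> real).
        (\<forall>k. c k \<ge> 0 \<and> bdd_lin_functional p (x k) (c k) \<and> lpA q (y k)) \<and>
        summable (\<lambda>k. c k * lpA_norm q (y k)) \<and>
        (\<forall>a. lpA p a \<longrightarrow> lpA q (T a) \<and>
           (\<lambda>N. lpA_norm q (\<lambda>n. T a n - (\<Sum>k<N. x k a * y k n))) \<longlonglongrightarrow> 0))"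

text \<open>Compact operator T : ell^p_A \<rightarrow> ell^q_A: linear, and the image of the unit ball
  is relatively compact in ell^q_A (sequential form: every sequence in the unit ball
  has a subsequence whose images converge in ell^q_A).\<close>

definition compact_op :: "real \<Rightarrow> real \<Rightarrow> ((nat \<Rightarrow> complex) \<Rightarrow> (nat \<Rightarrow> complex)) \<Rightarrow> bool" where
  "compact_op p q T \<longleftrightarrow>
     (\<forall>a. lpA p a \<longrightarrow> lpA q (T a)) \<and>
     (\<forall>a b. lpA p a \<longrightarrow> lpA p b \<longrightarrow> T (\<lambda>n. a n + b n) = (\<lambda>n. T a n + T b n)) \<and>
     (\<forall>a s. lpA p a \<longrightarrow> T (\<lambda>n. s * a n) = (\<lambda>n. s * T a n)) \<and>
     (\<forall>u :: nat \<Rightarrow> nat \<Rightarrow> complex. (\<forall>j. lpA p (u j) \<and> lpA_norm p (u j) \<le> 1) \<longrightarrow>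
        (\<exists>\<phi> b. strict_mono \<phi> \<and> lpA q b \<and>
           (\<lambda>j. lpA_norm q (\<lambda>n. T (u (\<phi> j)) n - b n)) \<longlonglongrightarrow> 0))"

end

theory Submission
  imports Defs
begin


lemma holder_series:
  fixes x y :: "nat \<Rightarrow> real" and p P B :: real
  assumes p: "p > 1" and P: "P = p/(p-1)" and x: "\<And>n. x n \<ge> 0" and y: "\<And>n. y n \<ge> 0"
    and sx: "summable (\<lambda>n. x n powr p)" and sy: "summable (\<lambda>n. y n powr P)"
    and B: "B \<ge> 0" "(\<Sum>n. y n powr P) \<le> B powr P"
  shows "summable (\<lambda>n. x n * y n) \<and> (\<Sum>n. x n * y n) \<le> (\<Sum>n. x n powr p) powr (1/p) * B"
proof -
  define S where "S = (\<Sum>n. x n powr p)"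
  define A where "A = S powr (1/p)"
  have S0: "S \<ge> 0" unfolding S_def by (intro suminf_nonneg sx) auto
  have P1: "P > 1" unfolding P using p by (simp add: less_divide_eq)
  have conj: "1/p + 1/P = 1" unfolding P using p by (simp add: divide_simps)
  have AS: "A powr p = S" unfolding A_def using S0 p by (simp add: powr_powr)
  show ?thesis
  proof (cases "A = 0 \<or> B = 0")
    case True
    have "\<forall>n. x n * y n = 0"
    proof (cases "A = 0")
      case True
      hence "S = 0" using AS p by simp
      hence "\<forall>n. x n powr p = 0" using suminf_eq_zero_iff[OF sx] unfolding S_def by simp
      thus ?thesis by simp
    next
      case False
      hence "B = 0" using \<open>A = 0 \<or> B = 0\<close> by simp
      hence "(\<Sum>n. y n powr P) = 0" using B P1 suminf_nonneg[OF sy] by simp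
      hence "\<forall>n. y n powr P = 0" using suminf_eq_zero_iff[OF sy] by simp
      thus ?thesis by simp
    qed
    hence "(\<lambda>n. x n * y n) = (\<lambda>n. 0)" by auto
    thus ?thesis using S0 B unfolding A_def S_def by simp
  next
    case False
    hence A0: "A > 0" and B0: "B > 0" using B unfolding A_def by auto
    define g where "g n = A * B * (x n powr p / (A powr p * p) + y n powr P / (B powr P * P))" for n
    have le: "x n * y n \<le> g n" for n
    proof -
      have "(x n / A) * (y n / B) \<le> (x n / A) powr p / p + (y n / B) powr P / P"
        using Youngs_inequality[OF p P1 conj, of "x n / A" "y n / B"] x y A0 B0 by simp
      also have "\<dots> = x n powr p / (A powr p * p) + y n powr P / (B powr P * P)"
        using x y A0 B0 by (simp add: powr_divide)
      finally show ?thesis using A0 B0 unfolding g_def by (simp add: field_simps)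
    qed
    have sg: "summable g" unfolding g_def
      by (intro summable_mult summable_add summable_divide sx sy)
    have sxy: "summable (\<lambda>n. x n * y n)"
      by (rule summable_comparison_test[OF _ sg]) (use le x y in auto)
    have "(\<Sum>n. x n * y n) \<le> (\<Sum>n. g n)" by (intro suminf_le le sxy sg)
    also have "(\<Sum>n. g n) = A * B * (S / (A powr p * p) + (\<Sum>n. y n powr P) / (B powr P * P))"
      unfolding g_def S_def
      by (subst suminf_mult, intro summable_add summable_divide sx sy)
         (simp add: suminf_add[symmetric] suminf_divide summable_divide sx sy)
    also have "\<dots> \<le> A * B * (1/p + 1/P)"
    proof -
      have "(\<Sum>n. y n powr P) / (B powr P * P) \<le> 1/P"
        using B B0 P1 by (simp add: field_simps)
      moreover have "S / (A powr p * p) = 1/p" using AS[symmetric] A0 p S0 by (simp add: field_simps)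
      ultimately show ?thesis using A0 B0 by (intro mult_left_mono) auto
    qed
    also have "\<dots> = A * B" using conj by simp
    finally show ?thesis using sxy unfolding A_def S_def by simp
  qed
qed


definition rowop :: "(nat \<Rightarrow> nat \<Rightarrow> real) \<Rightarrow> (nat \<Rightarrow> complex) \<Rightarrow> nat \<Rightarrow> complex" where
  "rowop R a = (\<lambda>k. \<Sum>n. complex_of_real (R k n) * a n)"

definition GH :: "real \<Rightarrow> (nat \<Rightarrow> nat \<Rightarrow> real) \<Rightarrow> (nat \<Rightarrow> real) \<Rightarrow> bool" where
  "GH p R \<sigma> \<longleftrightarrow> p > 1 \<and> (\<forall>k n. R k n \<ge> 0) \<and> (\<forall>k. \<sigma> k \<ge> 0) \<and>
     (\<forall>k. summable (\<lambda>n. R k n powr (p/(p-1)))) \<and>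
     (\<forall>k. (\<Sum>n. R k n powr (p/(p-1))) \<le> \<sigma> k powr (p/(p-1)))"

lemma lpA_norm_nonneg: "lpA_norm p a \<ge> 0"
  unfolding lpA_norm_def by simp

lemma gen_bound:
  assumes "GH p R \<sigma>" "lpA p a"
  shows "summable (\<lambda>n. norm (complex_of_real (R k n) * a n))"
    and "norm (rowop R a k) \<le> \<sigma> k * lpA_norm p a"
proof -
  have h: "summable (\<lambda>n. norm (a n) * R k n) \<and>
      (\<Sum>n. norm (a n) * R k n) \<le> (\<Sum>n. norm (a n) powr p) powr (1/p) * \<sigma> k"
  proof (rule holder_series[where P = "p/(p-1)"])
    show "summable (\<lambda>n. norm (a n) powr p)" using assms(2) unfolding lpA_def .
  qed (use assms(1) in \<open>auto simp: GH_def\<close>)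
  have eq: "(\<lambda>n. norm (complex_of_real (R k n) * a n)) = (\<lambda>n. norm (a n) * R k n)"
    using assms unfolding GH_def by (auto simp: norm_mult)
  show s: "summable (\<lambda>n. norm (complex_of_real (R k n) * a n))" using h eq by simp
  have "norm (rowop R a k) \<le> (\<Sum>n. norm (complex_of_real (R k n) * a n))"
    unfolding rowop_def by (rule summable_norm[OF s])
  also have "\<dots> \<le> \<sigma> k * lpA_norm p a" using h eq unfolding lpA_norm_def by (simp add: mult.commute)
  finally show "norm (rowop R a k) \<le> \<sigma> k * lpA_norm p a" .
qed

lemma gen_add:
  assumes "GH p R \<sigma>" "lpA p a" "lpA p b"
  shows "rowop R (\<lambda>n. a n + b n) = (\<lambda>k. rowop R a k + rowop R b k)"
proof
  fix k
  have sa: "summable (\<lambda>n. complex_of_real (R k n) * a n)"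
    by (rule summable_norm_cancel[OF gen_bound(1)[OF assms(1,2)]])
  have sb: "summable (\<lambda>n. complex_of_real (R k n) * b n)"
    by (rule summable_norm_cancel[OF gen_bound(1)[OF assms(1,3)]])
  show "rowop R (\<lambda>n. a n + b n) k = rowop R a k + rowop R b k"
    unfolding rowop_def using suminf_add[OF sa sb] by (simp add: distrib_left)
qed

lemma gen_scal:
  assumes "GH p R \<sigma>" "lpA p a"
  shows "rowop R (\<lambda>n. s * a n) = (\<lambda>k. s * rowop R a k)"
proof
  fix k
  have sa: "summable (\<lambda>n. complex_of_real (R k n) * a n)"
    by (rule summable_norm_cancel[OF gen_bound(1)[OF assms(1,2)]])
  show "rowop R (\<lambda>n. s * a n) k = s * rowop R a k"
    unfolding rowop_def using suminf_mult[OF sa, of s] by (simp add: mult.left_commute)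
qed

lemma gen_lpq:
  assumes "GH p R \<sigma>" "lpA p a" "q > 0" "summable (\<lambda>k. \<sigma> k powr q)"
  shows "lpA q (rowop R a)"
  unfolding lpA_def
proof (rule summable_comparison_test[OF _ summable_mult2[OF assms(4), of "lpA_norm p a powr q"]])
  show "\<exists>N. \<forall>n\<ge>N. norm (norm (rowop R a n) powr q) \<le> \<sigma> n powr q * lpA_norm p a powr q"
  proof (intro exI allI impI)
    fix n
    have "norm (rowop R a n) powr q \<le> (\<sigma> n * lpA_norm p a) powr q"
      using gen_bound(2)[OF assms(1,2)] assms(3) by (intro powr_mono2) auto
    also have "\<dots> = \<sigma> n powr q * lpA_norm p a powr q"
      using assms(1) lpA_norm_nonneg unfolding GH_def by (simp add: powr_mult)
    finally show "norm (norm (rowop R a n) powr q) \<le> \<sigma> n powr q * lpA_norm p a powr q" by simp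
  qed
qed

lemma summable_powr_of_summable:
  fixes s :: "nat \<Rightarrow> real"
  assumes "\<And>k. s k \<ge> 0" "summable s" "q \<ge> 1"
  shows "summable (\<lambda>k. s k powr q)"
proof (rule summable_comparison_test_ev[OF _ assms(2)])
  have "eventually (\<lambda>k. s k < 1) sequentially"
    using summable_LIMSEQ_zero[OF assms(2)] by (rule order_tendstoD) simp
  thus "eventually (\<lambda>k. norm (s k powr q) \<le> s k) sequentially"
  proof eventually_elim
    case (elim k)
    have "s k powr q \<le> s k powr 1"
      using elim assms(1)[of k] assms(3) by (intro powr_mono') auto
    thus ?case using assms(1)[of k] by simp
  qed
qed

lemma tail_tendsto:
  fixes f :: "nat \<Rightarrow> real"
  assumes "summable f" "\<And>n. f n \<ge> 0"
  shows "(\<lambda>N. \<Sum>n. if n < N then 0 else f n) \<longlonglongrightarrow> 0"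
proof -
  have "(\<lambda>N. \<Sum>n. if n < N then 0 else f n) \<longlonglongrightarrow> (\<Sum>n. (0::real))"
  proof (rule tannerys_theorem[THEN conjunct2, THEN conjunct2])
    fix k
    show "(\<lambda>N. if k < N then 0 else f k) \<longlonglongrightarrow> 0"
      by (rule tendsto_eventually, rule eventually_sequentiallyI[of "Suc k"]) auto
  next
    show "\<forall>\<^sub>F (k, N) in sequentially \<times>\<^sub>F sequentially. norm (if k < N then 0 else f k) \<le> f k"
      using assms(2) by (intro always_eventually) auto
  qed (use assms in auto)
  thus ?thesis by simp
qed



lemma lpA_norm_tendsto0:
  fixes g :: "nat \<Rightarrow> real"
  assumes "q > 0" "g \<longlonglongrightarrow> 0" "\<And>N. g N \<ge> 0"
  shows "(\<lambda>N. g N powr (1/q)) \<longlonglongrightarrow> 0"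
  using assms by (intro tendsto_zero_powrI[where b = "1/q"]) auto

lemma gen_nuclear:
  assumes G: "GH p R \<sigma>" and s: "summable \<sigma>" and q: "q \<ge> 1"
  shows "nuclear_op p q (rowop R)"
proof -
  have \<sigma>0: "\<And>k. \<sigma> k \<ge> 0" using G unfolding GH_def by auto
  have sq: "summable (\<lambda>k. \<sigma> k powr q)" by (rule summable_powr_of_summable[OF \<sigma>0 s q])
  define y :: "nat \<Rightarrow> nat \<Rightarrow> complex" where "y k = (\<lambda>n. if n = k then 1 else 0)" for k
  have ynorm: "(\<lambda>n. norm (y k n) powr q) = (\<lambda>n. if n = k then 1 else 0)" for k
    using q by (auto simp: y_def)
  have ysum: "(\<lambda>n. norm (y k n) powr q) sums 1" for k
    unfolding ynorm using sums_single[of k "\<lambda>_. 1::real"] by simp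
  have ylp: "lpA q (y k)" for k using ysum unfolding lpA_def by (auto simp: sums_iff)
  have ynm: "lpA_norm q (y k) = 1" for k using ysum unfolding lpA_norm_def by (simp add: sums_iff)
  show ?thesis
    unfolding nuclear_op_def
  proof (intro exI[of _ "\<lambda>k a. rowop R a k"] exI[of _ y] exI[of _ \<sigma>] conjI allI impI)
    fix k
    show "\<sigma> k \<ge> 0" by (rule \<sigma>0)
    show "lpA q (y k)" by (rule ylp)
    show "bdd_lin_functional p (\<lambda>a. rowop R a k) (\<sigma> k)"
      unfolding bdd_lin_functional_def
      using gen_add[OF G] gen_scal[OF G] gen_bound(2)[OF G] by (auto dest: fun_cong)
  next
    show "summable (\<lambda>k. \<sigma> k * lpA_norm q (y k))" using s by (simp add: ynm)
  next
    fix a assume a: "lpA p a"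
    show lq: "lpA q (rowop R a)" using gen_lpq[OF G a _ sq] q by simp
    have eq: "(\<lambda>n. rowop R a n - (\<Sum>k<N. rowop R a k * y k n)) = (\<lambda>n. if n < N then 0 else rowop R a n)" for N
    proof
      fix n
      have "(\<Sum>k<N. rowop R a k * y k n) = (\<Sum>k\<in>{..<N} \<inter> {n}. rowop R a k)"
        unfolding y_def by (simp add: sum.inter_restrict[symmetric] if_distrib cong: if_cong)
      thus "rowop R a n - (\<Sum>k<N. rowop R a k * y k n) = (if n < N then 0 else rowop R a n)"
        by (cases "n < N") auto
    qed
    have eq2: "(\<lambda>n. norm (if n < N then 0 else rowop R a n) powr q) =
               (\<lambda>n. if n < N then 0 else norm (rowop R a n) powr q)" for N
      by auto
    have "(\<lambda>N. \<Sum>n. if n < N then 0 else norm (rowop R a n) powr q) \<longlonglongrightarrow> 0"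
      using lq unfolding lpA_def by (intro tail_tendsto) auto
    hence "(\<lambda>N. (\<Sum>n. if n < N then 0 else norm (rowop R a n) powr q) powr (1/q)) \<longlonglongrightarrow> 0"
      using q by (intro lpA_norm_tendsto0) (auto intro!: suminf_nonneg summable_comparison_test[OF _ lq[unfolded lpA_def]])
    thus "(\<lambda>N. lpA_norm q (\<lambda>n. rowop R a n - (\<Sum>k<N. rowop R a k * y k n))) \<longlonglongrightarrow> 0"
      unfolding lpA_norm_def eq eq2 .
  qed
qed



lemma bounded_subseq:
  fixes v :: "nat \<Rightarrow> nat \<Rightarrow> complex" and s :: "nat \<Rightarrow> real"
  assumes "\<And>j k. norm (v j k) \<le> s k"
  shows "\<exists>\<phi> b. strict_mono \<phi> \<and> (\<forall>k. norm (b k) \<le> s k) \<and> (\<forall>k. (\<lambda>j. v (\<phi> j) k) \<longlonglongrightarrow> b k)"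
proof -
  define K where "K = PiE UNIV (\<lambda>k. cball (0::complex) (s k))"
  have "compactin (product_topology (\<lambda>i. euclidean) UNIV) K"
    unfolding K_def by (subst compactin_PiE) auto
  hence "compact K" by (simp add: euclidean_product_topology)
  hence "seq_compact K" by (rule compact_imp_seq_compact)
  moreover have "\<forall>j. v j \<in> K" using assms by (auto simp: K_def)
  ultimately obtain b \<phi> where b: "b \<in> K" "strict_mono \<phi>" "(v \<circ> \<phi>) \<longlonglongrightarrow> b"
    unfolding seq_compact_def by metis
  have "(\<lambda>j. v (\<phi> j) k) \<longlonglongrightarrow> b k" for k
    using continuous_on_tendsto_compose[OF continuous_on_product_coordinates[of k] b(3)]
    by (simp add: o_def)
  moreover have "\<forall>k. norm (b k) \<le> s k" using b(1) by (auto simp: K_def PiE_iff)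
  ultimately show ?thesis using b(2) by blast
qed

lemma gen_compact:
  assumes G: "GH p R \<sigma>" and sq: "summable (\<lambda>k. \<sigma> k powr q)" and q: "q \<ge> 1"
  shows "compact_op p q (rowop R)"
  unfolding compact_op_def
proof (intro conjI allI impI)
  have \<sigma>0: "\<And>k. \<sigma> k \<ge> 0" using G unfolding GH_def by auto
  show "lpA q (rowop R a)" if "lpA p a" for a using gen_lpq[OF G that _ sq] q by simp
  show "rowop R (\<lambda>n. a n + b n) = (\<lambda>n. rowop R a n + rowop R b n)" if "lpA p a" "lpA p b" for a b
    using gen_add[OF G that] .
  show "rowop R (\<lambda>n. s * a n) = (\<lambda>n. s * rowop R a n)" if "lpA p a" for a s
    using gen_scal[OF G that] .
  fix u :: "nat \<Rightarrow> nat \<Rightarrow> complex"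
  assume u: "\<forall>j. lpA p (u j) \<and> lpA_norm p (u j) \<le> 1"
  have vb: "norm (rowop R (u j) k) \<le> \<sigma> k" for j k
  proof -
    have "norm (rowop R (u j) k) \<le> \<sigma> k * lpA_norm p (u j)" using gen_bound(2)[OF G] u by blast
    also have "\<dots> \<le> \<sigma> k" using u \<sigma>0[of k] by (simp add: mult_left_le)
    finally show ?thesis .
  qed
  obtain \<phi> b where \<phi>: "strict_mono \<phi>" and bb: "\<forall>k. norm (b k) \<le> \<sigma> k"
      and lim: "\<forall>k. (\<lambda>j. rowop R (u (\<phi> j)) k) \<longlonglongrightarrow> b k"
    using bounded_subseq[of "\<lambda>j k. rowop R (u j) k" \<sigma>, OF vb] by blast
  have blp: "lpA q b" unfolding lpA_def
    by (rule summable_comparison_test[OF _ sq]) (use bb q in \<open>auto intro!: powr_mono2\<close>)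
  define M where "M k = 2 powr q * \<sigma> k powr q" for k
  have sM: "summable M" unfolding M_def by (intro summable_mult sq)
  have dlim: "(\<lambda>j. norm (rowop R (u (\<phi> j)) k - b k) powr q) \<longlonglongrightarrow> 0" for k
  proof -
    have "(\<lambda>j. norm (rowop R (u (\<phi> j)) k - b k)) \<longlonglongrightarrow> 0"
      using lim tendsto_diff[OF _ tendsto_const, of "\<lambda>j. rowop R (u (\<phi> j)) k" "b k" sequentially "b k"]
      by (simp add: tendsto_norm_zero_iff)
    thus ?thesis using q by (intro tendsto_zero_powrI[where b = q]) auto
  qed
  have dbound: "norm (norm (rowop R (u (\<phi> j)) k - b k) powr q) \<le> M k" for j k
  proof -
    have "norm (rowop R (u (\<phi> j)) k - b k) \<le> 2 * \<sigma> k"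
      using norm_triangle_ineq4[of "rowop R (u (\<phi> j)) k" "b k"] vb[of "\<phi> j" k] bb[rule_format, of k] by linarith
    hence "norm (rowop R (u (\<phi> j)) k - b k) powr q \<le> (2 * \<sigma> k) powr q"
      using q by (intro powr_mono2) auto
    thus ?thesis using \<sigma>0[of k] by (simp add: M_def powr_mult)
  qed
  have "(\<lambda>j. \<Sum>k. norm (rowop R (u (\<phi> j)) k - b k) powr q) \<longlonglongrightarrow> (\<Sum>k. (0::real))"
    by (rule tannerys_theorem[THEN conjunct2, THEN conjunct2, OF dlim _ sM])
       (use dbound in \<open>auto intro!: always_eventually\<close>)
  hence "(\<lambda>j. (\<Sum>k. norm (rowop R (u (\<phi> j)) k - b k) powr q) powr (1/q)) \<longlonglongrightarrow> 0"
    using q by (intro lpA_norm_tendsto0) (auto intro!: suminf_nonneg summable_comparison_test[OF _ sM] dbound)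
  hence "(\<lambda>j. lpA_norm q (\<lambda>n. rowop R (u (\<phi> j)) n - b n)) \<longlonglongrightarrow> 0"
    unfolding lpA_norm_def .
  thus "\<exists>\<phi> b. strict_mono \<phi> \<and> lpA q b \<and> (\<lambda>j. lpA_norm q (\<lambda>n. rowop R (u (\<phi> j)) n - b n)) \<longlonglongrightarrow> 0"
    using \<phi> blp by blast
qed



lemma summable_shift_powr:
  assumes "e > 1"
  shows "summable (\<lambda>k. (real k + 1) powr (-e))"
proof -
  have "summable (\<lambda>k. real k powr (-e))" using assms by (simp add: summable_real_powr_iff)
  hence "summable (\<lambda>k. real (Suc k) powr (-e))" by (subst summable_Suc_iff)
  thus ?thesis by (simp add: add.commute)
qed

lemma summable_decay:
  assumes "D \<ge> 0" "e * q > 1" "q > 0"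
  shows "summable (\<lambda>k. (D * (real k + 1) powr (-e)) powr q)"
proof -
  have "(\<lambda>k. (D * (real k + 1) powr (-e)) powr q) = (\<lambda>k. D powr q * (real k + 1) powr (-(e*q)))"
    using assms by (auto simp: powr_mult powr_powr)
  thus ?thesis using summable_mult[OF summable_shift_powr[OF assms(2)]] by simp
qed

lemma mu_bound:
  fixes mu :: "nat \<Rightarrow> real"
  assumes pos: "\<forall>n. mu n > 0" and noninc: "decseq mu" and r: "r > 1"
    and decay: "mu \<in> O(\<lambda>n. 1 / real n powr r)"
  shows "\<exists>C>0. \<forall>n. mu n \<le> C * (real n + 1) powr (-r)"
proof -
  obtain c where c: "c > 0" and ev: "eventually (\<lambda>n. norm (mu n) \<le> c * norm (1 / real n powr r)) sequentially"
    using landau_o.bigE[OF decay] by blast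
  then obtain N where N: "\<And>n. n \<ge> N \<Longrightarrow> norm (mu n) \<le> c * norm (1 / real n powr r)"
    unfolding eventually_sequentially by blast
  define M where "M = max N 1"
  define C where "C = c * 2 powr r + mu 0 * (real M + 1) powr r"
  have C0: "C > 0" unfolding C_def using c pos by (intro add_pos_pos) auto
  have "mu n \<le> C * (real n + 1) powr (-r)" for n
  proof (cases "n \<ge> M")
    case True
    hence n1: "n \<ge> 1" "n \<ge> N" unfolding M_def by auto
    have "mu n \<le> c * (1 / real n powr r)" using N[OF n1(2)] pos by simp
    also have "\<dots> \<le> c * 2 powr r * (real n + 1) powr (-r)"
    proof -
      have "(real n + 1) powr r \<le> (2 * real n) powr r" using n1 r by (intro powr_mono2) auto
      also have "\<dots> = 2 powr r * real n powr r" by (simp add: powr_mult)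
      finally have "(real n + 1) powr r \<le> 2 powr r * real n powr r" .
      hence "1 / real n powr r \<le> 2 powr r / (real n + 1) powr r"
        using n1 by (simp add: field_simps)
      thus ?thesis using c by (simp add: powr_minus divide_inverse mult.assoc)
    qed
    also have "\<dots> \<le> C * (real n + 1) powr (-r)"
      unfolding C_def using pos[rule_format, of 0] by (intro mult_right_mono) auto
    finally show ?thesis .
  next
    case False
    have "mu n \<le> mu 0" using noninc by (simp add: decseq_def)
    also have "\<dots> \<le> mu 0 * ((real M + 1) powr r * (real n + 1) powr (-r))"
    proof -
      have "(real n + 1) powr r \<le> (real M + 1) powr r" using False r by (intro powr_mono2) auto
      hence "1 \<le> (real M + 1) powr r * (real n + 1) powr (-r)"
        by (simp add: powr_minus field_simps)
      thus ?thesis using pos by simp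
    qed
    also have "\<dots> \<le> C * (real n + 1) powr (-r)"
      unfolding C_def using c by (simp add: algebra_simps)
    finally show ?thesis .
  qed
  thus ?thesis using C0 by blast
qed

lemma cesaro_eq: "cesaro_op mu = rowop (\<lambda>k n. if n \<le> k then mu k else 0)"
proof (intro ext)
  fix a k
  have "rowop (\<lambda>k n. if n \<le> k then mu k else 0) a k = (\<Sum>n\<in>{..k}. complex_of_real (mu k) * a n)"
    unfolding rowop_def by (subst suminf_finite[of "{..k}"]) auto
  thus "cesaro_op mu a k = rowop (\<lambda>k n. if n \<le> k then mu k else 0) a k"
    unfolding cesaro_op_def by (simp add: sum_distrib_left)
qed

lemma hankel_eq: "hankel_op mu = rowop (\<lambda>k n. mu (n + k))"
  unfolding hankel_op_def rowop_def by simp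



lemma hankel_GH:
  fixes mu :: "nat \<Rightarrow> real"
  assumes pos: "\<forall>n. mu n > 0" and C: "C > 0" and Cb: "\<forall>n. mu n \<le> C * (real n + 1) powr (-r)"
    and p: "p > 1" and ab: "\<alpha> \<ge> 0" "\<beta> \<ge> 0" "\<alpha> + \<beta> = r" and bP: "\<beta> * (p/(p-1)) > 1"
  shows "\<exists>D\<ge>0. GH p (\<lambda>k n. mu (n + k)) (\<lambda>k. D * (real k + 1) powr (-\<alpha>))"
proof -
  define P where "P = p/(p-1)"
  have P0: "P > 0" unfolding P_def using p by simp
  define Z where "Z = (\<Sum>n. (real n + 1) powr (-(\<beta>*P)))"
  have sZ: "summable (\<lambda>n. (real n + 1) powr (-(\<beta>*P)))"
    using summable_shift_powr bP unfolding P_def by blast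
  have Z0: "Z \<ge> 0" unfolding Z_def by (intro suminf_nonneg sZ) auto
  define D where "D = C * Z powr (1/P)"
  have D0: "D \<ge> 0" unfolding D_def using C by simp
  have pt: "mu (n + k) powr P \<le> (C * (real k + 1) powr (-\<alpha>)) powr P * (real n + 1) powr (-(\<beta>*P))" for n k
  proof -
    have "(real (n+k) + 1) powr (-r) = (real (n+k) + 1) powr (-\<alpha>) * (real (n+k) + 1) powr (-\<beta>)"
    proof -
      have "-r = -\<alpha> + -\<beta>" using ab by simp
      thus ?thesis by (simp only: powr_add)
    qed
    also have "\<dots> \<le> (real k + 1) powr (-\<alpha>) * (real n + 1) powr (-\<beta>)"
      using ab by (intro mult_mono powr_mono2') auto
    finally have "mu (n + k) \<le> C * ((real k + 1) powr (-\<alpha>) * (real n + 1) powr (-\<beta>))"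
      using Cb[rule_format, of "n+k"] C by (smt (verit) mult_left_mono)
    hence "mu (n + k) powr P \<le> (C * ((real k + 1) powr (-\<alpha>) * (real n + 1) powr (-\<beta>))) powr P"
      using pos P0 by (intro powr_mono2) (auto simp: less_imp_le)
    also have "\<dots> = (C * (real k + 1) powr (-\<alpha>)) powr P * (real n + 1) powr (-(\<beta>*P))"
      using C by (simp add: powr_mult powr_powr mult.assoc)
    finally show ?thesis .
  qed
  have "GH p (\<lambda>k n. mu (n + k)) (\<lambda>k. D * (real k + 1) powr (-\<alpha>))"
    unfolding GH_def P_def[symmetric]
  proof (intro conjI allI)
    show "p > 1" by (rule p)
    fix k
    show "0 \<le> D * (real k + 1) powr (-\<alpha>)" using D0 by simp
    have s: "summable (\<lambda>n. mu (n + k) powr P)"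
      by (rule summable_comparison_test[OF _ summable_mult[OF sZ]]) (use pt in auto)
    thus "summable (\<lambda>n. mu (n + k) powr P)" .
    have "(\<Sum>n. mu (n + k) powr P) \<le> (\<Sum>n. (C * (real k + 1) powr (-\<alpha>)) powr P * (real n + 1) powr (-(\<beta>*P)))"
      by (intro suminf_le pt s summable_mult sZ)
    also have "\<dots> = (C * (real k + 1) powr (-\<alpha>)) powr P * Z"
      unfolding Z_def by (rule suminf_mult[OF sZ])
    also have "\<dots> = (D * (real k + 1) powr (-\<alpha>)) powr P"
      unfolding D_def using C Z0 P0 by (simp add: powr_mult powr_powr)
    finally show "(\<Sum>n. mu (n + k) powr P) \<le> (D * (real k + 1) powr (-\<alpha>)) powr P" .
    fix n show "0 \<le> mu (n + k)" using pos by (simp add: less_imp_le)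
  qed
  thus ?thesis using D0 by blast
qed

lemma cesaro_GH:
  fixes mu :: "nat \<Rightarrow> real"
  assumes pos: "\<forall>n. mu n > 0" and C: "C > 0" and Cb: "\<forall>n. mu n \<le> C * (real n + 1) powr (-r)"
    and p: "p > 1"
  shows "GH p (\<lambda>k n. if n \<le> k then mu k else 0) (\<lambda>k. C * (real k + 1) powr (-(r - (p-1)/p)))"
  unfolding GH_def
proof (intro conjI allI)
  define P where "P = p/(p-1)"
  have P0: "P > 0" unfolding P_def using p by simp
  have iP: "1/P = (p-1)/p" unfolding P_def by simp
  show "p > 1" by (rule p)
  fix k
  show "0 \<le> C * (real k + 1) powr (-(r - (p-1)/p))" using C by simp
  have eq: "(\<Sum>n. (if n \<le> k then mu k else 0) powr P) = (\<Sum>n\<in>{..k}. mu k powr P)"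
    by (subst suminf_finite[of "{..k}"]) auto
  show "summable (\<lambda>n. (if n \<le> k then mu k else 0) powr (p/(p-1)))"
    by (rule summable_finite[of "{..k}"]) auto
  have "(\<Sum>n. (if n \<le> k then mu k else 0) powr P) = (real k + 1) * mu k powr P"
    unfolding eq by simp
  also have "\<dots> \<le> (real k + 1) * (C * (real k + 1) powr (-r)) powr P"
    using pos Cb P0 by (intro mult_left_mono powr_mono2) (auto simp: less_imp_le)
  also have "\<dots> = (C * (real k + 1) powr (-(r - 1/P))) powr P"
  proof -
    define x where "x = real k + 1"
    have x0: "x > 0" unfolding x_def by simp
    have e: "(1/P - r) * P = 1 - r*P" using P0 by (simp add: field_simps)
    have "(C * x powr (-(r - 1/P))) powr P = C powr P * x powr (1 - r*P)"
      using C x0 by (simp add: powr_mult powr_powr e)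
    moreover have "x * (C * x powr (-r)) powr P = C powr P * x powr (1 - r*P)"
    proof -
      have "x * x powr (-(r*P)) = x powr 1 * x powr (-(r*P))" using x0 by simp
      also have "\<dots> = x powr (1 - r*P)" by (subst powr_add[symmetric]) simp
      finally show ?thesis using C x0 by (simp add: powr_mult powr_powr)
    qed
    ultimately show ?thesis unfolding x_def by simp
  qed
  finally show "(\<Sum>n. (if n \<le> k then mu k else 0) powr (p/(p-1))) \<le> (C * (real k + 1) powr (-(r - (p-1)/p))) powr (p/(p-1))"
    unfolding P_def[symmetric] iP[symmetric] .
  fix n show "0 \<le> (if n \<le> k then mu k else 0)" using pos by (simp add: less_imp_le)
qed



lemma summable_decay1:
  assumes "D \<ge> 0" "e > 1"
  shows "summable (\<lambda>k. D * (real k + 1) powr (-e))"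
  using summable_decay[OF assms(1), of e 1] assms by simp

theorem proposition32:
  fixes mu :: "nat \<Rightarrow> real" and r :: real
  assumes pos: "\<forall>n. mu n > 0"
    and noninc: "decseq mu"
    and r: "r > 1"
    and decay: "mu \<in> O(\<lambda>n. 1 / real n powr r)"
  shows "(\<forall>q::real. q \<ge> 1 \<longrightarrow> (\<exists>p0 > 1. \<forall>p::real. 1 < p \<and> p < p0 \<longrightarrow>
            (\<forall>a. lpA p a \<longrightarrow> lpA q (hankel_op mu a)) \<and>
            (\<forall>a. lpA p a \<longrightarrow> lpA q (cesaro_op mu a)) \<and>
            (q = 1 \<longrightarrow> nuclear_op p q (hankel_op mu) \<and> nuclear_op p q (cesaro_op mu)) \<and>
            (q > 1 \<longrightarrow> compact_op p q (hankel_op mu) \<and> compact_op p q (cesaro_op mu))))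
       \<and> (\<forall>a. lpA 2 a \<longrightarrow> lpA 2 (hankel_op mu a))
       \<and> (\<forall>a. lpA 2 a \<longrightarrow> lpA 2 (cesaro_op mu a))
       \<and> compact_op 2 2 (hankel_op mu) \<and> compact_op 2 2 (cesaro_op mu)
       \<and> (r > 3/2 \<longrightarrow> nuclear_op 2 2 (hankel_op mu) \<and> nuclear_op 2 2 (cesaro_op mu))"
proof -
  obtain C where C: "C > 0" and Cb: "\<forall>n. mu n \<le> C * (real n + 1) powr (-r)"
    using mu_bound[OF pos noninc r decay] by blast
  have part1: "\<exists>p0 > 1. \<forall>p::real. 1 < p \<and> p < p0 \<longrightarrow>
            (\<forall>a. lpA p a \<longrightarrow> lpA q (hankel_op mu a)) \<and>
            (\<forall>a. lpA p a \<longrightarrow> lpA q (cesaro_op mu a)) \<and>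
            (q = 1 \<longrightarrow> nuclear_op p q (hankel_op mu) \<and> nuclear_op p q (cesaro_op mu)) \<and>
            (q > 1 \<longrightarrow> compact_op p q (hankel_op mu) \<and> compact_op p q (cesaro_op mu))"
    if q: "q \<ge> 1" for q
  proof -
    define \<delta> where "\<delta> = min ((r-1)/2) (1/2)"
    have \<delta>: "\<delta> > 0" "\<delta> \<le> 1/2" "\<delta> \<le> (r-1)/2" using r unfolding \<delta>_def by (auto simp: min_def)
    define p0 where "p0 = 1/(1-\<delta>)"
    have p0: "p0 > 1" unfolding p0_def using \<delta> by (simp add: field_simps)
    show ?thesis
    proof (intro exI[of _ p0] conjI p0 allI impI)
      fix p :: real assume pp: "1 < p \<and> p < p0"
      have t: "(p-1)/p < \<delta>"
      proof -
        have "p * (1 - \<delta>) < 1" using pp \<delta> unfolding p0_def by (simp add: field_simps)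
        thus ?thesis using pp by (simp add: field_simps)
      qed
      have bP: "\<delta> * (p/(p-1)) > 1"
      proof -
        have "(p-1)/p * (p/(p-1)) = 1" using pp by simp
        moreover have "(p-1)/p * (p/(p-1)) < \<delta> * (p/(p-1))"
          using t pp by (intro mult_strict_right_mono) auto
        ultimately show ?thesis by simp
      qed
      obtain D where D: "D \<ge> 0" and GHh: "GH p (\<lambda>k n. mu (n + k)) (\<lambda>k. D * (real k + 1) powr (-(r - \<delta>)))"
        using hankel_GH[OF pos C Cb, of p "r - \<delta>" \<delta>] pp \<delta> bP r by auto
      have GHc: "GH p (\<lambda>k n. if n \<le> k then mu k else 0) (\<lambda>k. C * (real k + 1) powr (-(r - (p-1)/p)))"
        using cesaro_GH[OF pos C Cb] pp by auto
      have sh: "summable (\<lambda>k. D * (real k + 1) powr (-(r - \<delta>)))"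
        using D \<delta> r by (intro summable_decay1) auto
      have sc: "summable (\<lambda>k. C * (real k + 1) powr (-(r - (p-1)/p)))"
        using C \<delta> r t by (intro summable_decay1) auto
      have shq: "summable (\<lambda>k. (D * (real k + 1) powr (-(r - \<delta>))) powr q)"
        using D q by (intro summable_powr_of_summable sh) auto
      have scq: "summable (\<lambda>k. (C * (real k + 1) powr (-(r - (p-1)/p))) powr q)"
        using C q by (intro summable_powr_of_summable sc) auto
      show "lpA q (hankel_op mu a)" if "lpA p a" for a
        unfolding hankel_eq using gen_lpq[OF GHh that _ shq] q by auto
      show "lpA q (cesaro_op mu a)" if "lpA p a" for a
        unfolding cesaro_eq using gen_lpq[OF GHc that _ scq] q by auto
      show "nuclear_op p q (hankel_op mu)" if "q = 1" unfolding hankel_eq by (rule gen_nuclear[OF GHh sh q])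
      show "nuclear_op p q (cesaro_op mu)" if "q = 1" unfolding cesaro_eq by (rule gen_nuclear[OF GHc sc q])
      show "compact_op p q (hankel_op mu)" if "q > 1" unfolding hankel_eq by (rule gen_compact[OF GHh shq q])
      show "compact_op p q (cesaro_op mu)" if "q > 1" unfolding cesaro_eq by (rule gen_compact[OF GHc scq q])
    qed
  qed
  obtain D where D: "D \<ge> 0" and GHh: "GH 2 (\<lambda>k n. mu (n + k)) (\<lambda>k. D * (real k + 1) powr (-(r/2)))"
    using hankel_GH[OF pos C Cb, of 2 "r/2" "r/2"] r by auto
  have GHc: "GH 2 (\<lambda>k n. if n \<le> k then mu k else 0) (\<lambda>k. C * (real k + 1) powr (-(r - (2-1)/2)))"
    using cesaro_GH[OF pos C Cb, of 2] by simp
  have sh2: "summable (\<lambda>k. (D * (real k + 1) powr (-(r/2))) powr 2)"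
    using D r by (intro summable_decay) auto
  have sc2: "summable (\<lambda>k. (C * (real k + 1) powr (-(r - (2-1)/2))) powr 2)"
    using C r by (intro summable_decay) auto
  have l2h: "\<forall>a. lpA 2 a \<longrightarrow> lpA 2 (hankel_op mu a)"
    unfolding hankel_eq using gen_lpq[OF GHh _ _ sh2] by auto
  have l2c: "\<forall>a. lpA 2 a \<longrightarrow> lpA 2 (cesaro_op mu a)"
    unfolding cesaro_eq using gen_lpq[OF GHc _ _ sc2] by auto
  have c2h: "compact_op 2 2 (hankel_op mu)" unfolding hankel_eq by (rule gen_compact[OF GHh sh2]) simp
  have c2c: "compact_op 2 2 (cesaro_op mu)" unfolding cesaro_eq by (rule gen_compact[OF GHc sc2]) simp
  have n2: "nuclear_op 2 2 (hankel_op mu) \<and> nuclear_op 2 2 (cesaro_op mu)" if r32: "r > 3/2"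
  proof
    have e: "(2*r+1)/4 + (2*r-1)/4 = r" by (simp add: field_simps)
    obtain D' where D': "D' \<ge> 0" and GHh': "GH 2 (\<lambda>k n. mu (n + k)) (\<lambda>k. D' * (real k + 1) powr (-((2*r+1)/4)))"
      using hankel_GH[OF pos C Cb, of 2 "(2*r+1)/4" "(2*r-1)/4"] r r32 e by auto
    have s: "summable (\<lambda>k. D' * (real k + 1) powr (-((2*r+1)/4)))"
      using D' r32 by (intro summable_decay1) auto
    show "nuclear_op 2 2 (hankel_op mu)" unfolding hankel_eq by (rule gen_nuclear[OF GHh' s]) simp
    have s': "summable (\<lambda>k. C * (real k + 1) powr (-(r - (2-1)/2)))"
      using C r32 by (intro summable_decay1) auto
    show "nuclear_op 2 2 (cesaro_op mu)" unfolding cesaro_eq by (rule gen_nuclear[OF GHc s']) simp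
  qed
  show ?thesis using part1 l2h l2c c2h c2c n2 by blast
qed


end
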